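(* Let a graphical constant-sum game with $m$ agents be given and let $\hat{\mathbf{x}}^*=(\mathbf{x}^*_1,\ldots,\mathbf{x}^*_m)\in\Delta$ be a Nash equilibrium of it. Then for every $t\ge0$ and every function $\hat{\mathbf{x}}:[0,\infty)\to\Delta$ (with $\hat{\mathbf{p}}(\tau)=G(\hat{\mathbf{x}}(\tau))$), $$\int_0^t\langle\hat{\mathbf{x}}(\tau)-\hat{\mathbf{x}}^*,-\hat{\mathbf{p}}(\tau)\rangle\,d\tau\ \ge\ 0,$$ i.e. the game operator with shift $\hat{\mathbf{x}}^*$ is passive via the zero storage function. Moreover, if $\hat{\mathbf{x}}^*$ is fully mixed (every entry positive), then this integral equals $0$ for all such $\hat{\mathbf{x}}$ and $t$, i.e. the game operator with shift $\hat{\mathbf{x}}^*$ is lossless via the zero storage function.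
   Context: Agent $i\in\{1,\ldots,m\}$ has $n_i$ actions; $\Delta^{n}=\{\mathbf{x}\in\mathbb{R}^n:x_j\ge0,\sum_jx_j=1\}$ and $\Delta=\Delta^{n_1}\times\cdots\times\Delta^{n_m}$. A graphical game is given by matrices $\mathbf{A}^{ik}\in\mathbb{R}^{n_i\times n_k}$ for all ordered pairs $i\neq k$; for $\hat{\mathbf{x}}=(\mathbf{x}_1,\ldots,\mathbf{x}_m)\in\Delta$ the payoff vector of agent $i$ is $\mathbf{p}_i=\sum_{k\neq i}\mathbf{A}^{ik}\mathbf{x}_k$, and $G(\hat{\mathbf{x}})=\hat{\mathbf{p}}=(\mathbf{p}_1,\ldots,\mathbf{p}_m)$; agent $i$'s payoff is $\langle\mathbf{x}_i,\mathbf{p}_i\rangle$. It is graphical constant-sum if for every pair $\{i,k\}$ there is a constant $c^{\{i,k\}}$ with $\mathbf{A}^{ik}_{j\ell}+\mathbf{A}^{ki}_{\ell j}=c^{\{i,k\}}$ for all actions $j$ of $i$ and $\ell$ of $k$. A Nash equilibrium is $\hat{\mathbf{x}}^*\in\Delta$ such that for each $i$, $\mathbf{x}^*_i$ maximizes agent $i$'s payoff given the others' strategies $\mathbf{x}^*_k$, $k\neq i$. The game operator with shift $\hat{\mathbf{x}}^*$ has input $\hat{\mathbf{x}}-\hat{\mathbf{x}}^*$ and output $-\hat{\mathbf{p}}$, with no state; passivity via the zero storage function means the displayed integral inequality, losslessness means equality. *)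

theory Defs
  imports "HOL-Analysis.Analysis"
begin

text \<open>Agents are 0..<m; agent i has actions 0..<n i.  A strategy of agent i is a
  function nat => real (only entries j < n i matter); a profile is nat => nat => real.
  The payoff matrices are A i k j l = entry (j,l) of the matrix A^{ik}.\<close>

definition strategy_simplex :: "nat \<Rightarrow> (nat \<Rightarrow> real) \<Rightarrow> bool" where
  "strategy_simplex d v \<longleftrightarrow> (\<forall>j<d. 0 \<le> v j) \<and> (\<Sum>j<d. v j) = 1"

definition profile :: "nat \<Rightarrow> (nat \<Rightarrow> nat) \<Rightarrow> (nat \<Rightarrow> nat \<Rightarrow> real) \<Rightarrow> bool" where
  "profile m n x \<longleftrightarrow> (\<forall>i<m. strategy_simplex (n i) (x i))"

definition payoff_vec ::
  "nat \<Rightarrow> (nat \<Rightarrow> nat) \<Rightarrow> (nat \<Rightarrow> nat \<Rightarrow> nat \<Rightarrow> nat \<Rightarrow> real) \<Rightarrow> (nat \<Rightarrow> nat \<Rightarrow> real)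
     \<Rightarrow> nat \<Rightarrow> nat \<Rightarrow> real" where
  "payoff_vec m n A x i j = (\<Sum>k\<in>{..<m} - {i}. \<Sum>l<n k. A i k j l * x k l)"

definition payoff ::
  "nat \<Rightarrow> (nat \<Rightarrow> nat) \<Rightarrow> (nat \<Rightarrow> nat \<Rightarrow> nat \<Rightarrow> nat \<Rightarrow> real) \<Rightarrow> (nat \<Rightarrow> nat \<Rightarrow> real)
     \<Rightarrow> nat \<Rightarrow> real" where
  "payoff m n A x i = (\<Sum>j<n i. x i j * payoff_vec m n A x i j)"

definition graphical_constant_sum ::
  "nat \<Rightarrow> (nat \<Rightarrow> nat) \<Rightarrow> (nat \<Rightarrow> nat \<Rightarrow> nat \<Rightarrow> nat \<Rightarrow> real) \<Rightarrow> bool" where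
  "graphical_constant_sum m n A \<longleftrightarrow>
     (\<forall>i<m. \<forall>k<m. i \<noteq> k \<longrightarrow>
        (\<exists>c::real. \<forall>j<n i. \<forall>l<n k. A i k j l + A k i l j = c))"

definition nash_equilibrium ::
  "nat \<Rightarrow> (nat \<Rightarrow> nat) \<Rightarrow> (nat \<Rightarrow> nat \<Rightarrow> nat \<Rightarrow> nat \<Rightarrow> real) \<Rightarrow> (nat \<Rightarrow> nat \<Rightarrow> real) \<Rightarrow> bool" where
  "nash_equilibrium m n A xs \<longleftrightarrow> profile m n xs \<and>
     (\<forall>i<m. \<forall>y. strategy_simplex (n i) y \<longrightarrow> payoff m n A (xs(i := y)) i \<le> payoff m n A xs i)"

definition fully_mixed :: "nat \<Rightarrow> (nat \<Rightarrow> nat) \<Rightarrow> (nat \<Rightarrow> nat \<Rightarrow> real) \<Rightarrow> bool" where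
  "fully_mixed m n xs \<longleftrightarrow> (\<forall>i<m. \<forall>j<n i. 0 < xs i j)"

definition supply_rate ::
  "nat \<Rightarrow> (nat \<Rightarrow> nat) \<Rightarrow> (nat \<Rightarrow> nat \<Rightarrow> nat \<Rightarrow> nat \<Rightarrow> real) \<Rightarrow> (nat \<Rightarrow> nat \<Rightarrow> real)
     \<Rightarrow> (nat \<Rightarrow> nat \<Rightarrow> real) \<Rightarrow> real" where
  "supply_rate m n A xs x = (\<Sum>i<m. \<Sum>j<n i. (x i j - xs i j) * (- payoff_vec m n A x i j))"

end

theory Submission
  imports Defs
begin

definition Bf :: "nat \<Rightarrow> (nat \<Rightarrow> nat) \<Rightarrow> (nat \<Rightarrow> nat \<Rightarrow> nat \<Rightarrow> nat \<Rightarrow> real) \<Rightarrow> (nat \<Rightarrow> nat \<Rightarrow> real)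
     \<Rightarrow> (nat \<Rightarrow> nat \<Rightarrow> real) \<Rightarrow> real" where
  "Bf m n A u v = (\<Sum>i<m. \<Sum>j<n i. u i j * payoff_vec m n A v i j)"

lemma sum_minus_if:
  fixes f :: "nat \<Rightarrow> real"
  shows "(\<Sum>k\<in>{..<m} - {i}. f k) = (\<Sum>k<m. if k = i then 0 else f k)"
proof -
  have "(\<Sum>k<m. if k = i then 0 else f k) = (\<Sum>k\<in>{..<m} - {i}. if k = i then 0 else f k)"
    by (rule sum.mono_neutral_right) auto
  also have "\<dots> = (\<Sum>k\<in>{..<m} - {i}. f k)" by (rule sum.cong) auto
  finally show ?thesis by simp
qed

lemma Bf_expand:
  "Bf m n A u v = (\<Sum>i<m. \<Sum>k<m. if k = i then 0 else (\<Sum>j<n i. \<Sum>l<n k. A i k j l * u i j * v k l))"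
proof -
  have "Bf m n A u v = (\<Sum>i<m. \<Sum>j<n i. \<Sum>k<m. if k = i then 0 else (\<Sum>l<n k. A i k j l * u i j * v k l))"
    unfolding Bf_def payoff_vec_def sum_minus_if
    apply (intro sum.cong refl)
    apply (subst sum_distrib_left)
    apply (rule sum.cong[OF refl])
    apply (auto simp: sum_distrib_left mult_ac)
    done
  also have "\<dots> = (\<Sum>i<m. \<Sum>k<m. \<Sum>j<n i. if k = i then 0 else (\<Sum>l<n k. A i k j l * u i j * v k l))"
    by (rule sum.cong[OF refl], rule sum.swap)
  also have "\<dots> = (\<Sum>i<m. \<Sum>k<m. if k = i then 0 else (\<Sum>j<n i. \<Sum>l<n k. A i k j l * u i j * v k l))"
    by (intro sum.cong refl) auto
  finally show ?thesis .
qed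

lemma Bf_expand_swap:
  "Bf m n A v u = (\<Sum>i<m. \<Sum>k<m. if k = i then 0 else (\<Sum>j<n i. \<Sum>l<n k. A k i l j * u i j * v k l))"
proof -
  have "Bf m n A v u = (\<Sum>i<m. \<Sum>k<m. if k = i then 0 else (\<Sum>j<n i. \<Sum>l<n k. A i k j l * v i j * u k l))"
    by (rule Bf_expand)
  also have "\<dots> = (\<Sum>k<m. \<Sum>i<m. if k = i then 0 else (\<Sum>j<n i. \<Sum>l<n k. A i k j l * v i j * u k l))"
    by (rule sum.swap)
  also have "\<dots> = (\<Sum>k<m. \<Sum>i<m. if k = i then 0 else (\<Sum>l<n k. \<Sum>j<n i. A i k j l * v i j * u k l))"
  proof (intro sum.cong refl)
    fix k i
    show "(if k = i then 0 else (\<Sum>j<n i. \<Sum>l<n k. A i k j l * v i j * u k l)) =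
          (if k = i then 0 else (\<Sum>l<n k. \<Sum>j<n i. A i k j l * v i j * u k l))"
    proof -
      have "(\<Sum>j<n i. \<Sum>l<n k. A i k j l * v i j * u k l) = (\<Sum>l<n k. \<Sum>j<n i. A i k j l * v i j * u k l)"
        by (rule sum.swap)
      then show ?thesis by simp
    qed
  qed
  also have "\<dots> = (\<Sum>i<m. \<Sum>k<m. if k = i then 0 else (\<Sum>j<n i. \<Sum>l<n k. A k i l j * u i j * v k l))"
    by (intro sum.cong refl) (auto simp: mult_ac)
  finally show ?thesis .
qed

lemma Bf_sym:
  assumes gcs: "graphical_constant_sum m n A"
    and pu: "profile m n u" and pv: "profile m n v"
  shows "Bf m n A u v + Bf m n A v u =
     (\<Sum>i<m. \<Sum>k<m. if k = i then 0 else A i k 0 0 + A k i 0 0)"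
proof -
  have "Bf m n A u v + Bf m n A v u =
     (\<Sum>i<m. \<Sum>k<m. if k = i then 0 else (\<Sum>j<n i. \<Sum>l<n k. (A i k j l + A k i l j) * u i j * v k l))"
    unfolding Bf_expand[of m n A u v] Bf_expand_swap[of m n A v u] sum.distrib[symmetric]
    by (intro sum.cong refl) (auto simp: sum.distrib[symmetric] distrib_right)
  also have "\<dots> = (\<Sum>i<m. \<Sum>k<m. if k = i then 0 else A i k 0 0 + A k i 0 0)"
  proof (intro sum.cong refl)
    fix i k assume i: "i \<in> {..<m}" and k: "k \<in> {..<m}"
    show "(if k = i then 0 else (\<Sum>j<n i. \<Sum>l<n k. (A i k j l + A k i l j) * u i j * v k l))
        = (if k = i then 0 else A i k 0 0 + A k i 0 0)"
    proof (cases "k = i")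
      case False
      have su: "strategy_simplex (n i) (u i)" using pu i by (simp add: profile_def)
      have sv: "strategy_simplex (n k) (v k)" using pv k by (simp add: profile_def)
      have ni: "0 < n i" using su by (auto simp: strategy_simplex_def intro: Nat.gr0I)
      have nk: "0 < n k" using sv by (auto simp: strategy_simplex_def intro: Nat.gr0I)
      have "\<exists>c. \<forall>j<n i. \<forall>l<n k. A i k j l + A k i l j = c"
        using gcs i k False unfolding graphical_constant_sum_def by auto
      then obtain c where c: "\<forall>j<n i. \<forall>l<n k. A i k j l + A k i l j = c" by blast
      have c0: "c = A i k 0 0 + A k i 0 0" using c ni nk by auto
      have "(\<Sum>j<n i. \<Sum>l<n k. (A i k j l + A k i l j) * u i j * v k l)
          = (\<Sum>j<n i. \<Sum>l<n k. c * u i j * v k l)"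
        using c by (intro sum.cong refl) auto
      also have "\<dots> = c * (\<Sum>j<n i. u i j) * (\<Sum>l<n k. v k l)"
        by (simp add: sum_distrib_left sum_distrib_right mult_ac)
      also have "\<dots> = c" using su sv by (simp add: strategy_simplex_def)
      finally show ?thesis using False c0 by simp
    qed simp
  qed
  finally show ?thesis .
qed

lemma payoff_vec_upd: "payoff_vec m n A (x(i := y)) i j = payoff_vec m n A x i j"
  unfolding payoff_vec_def by (intro sum.cong refl) auto

lemma nash_ineq:
  assumes ne: "nash_equilibrium m n A xs" and i: "i < m" and y: "strategy_simplex (n i) y"
  shows "(\<Sum>j<n i. y j * payoff_vec m n A xs i j) \<le> (\<Sum>j<n i. xs i j * payoff_vec m n A xs i j)"
  using ne i y unfolding nash_equilibrium_def payoff_def payoff_vec_upd by force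

lemma nash_const:
  assumes ne: "nash_equilibrium m n A xs" and fm: "fully_mixed m n xs" and i: "i < m"
    and j0: "j0 < n i"
  shows "payoff_vec m n A xs i j0 = (\<Sum>j<n i. xs i j * payoff_vec m n A xs i j)"
proof -
  define V where "V = (\<Sum>j<n i. xs i j * payoff_vec m n A xs i j)"
  have le: "payoff_vec m n A xs i j \<le> V" if j: "j < n i" for j
  proof -
    have ys: "strategy_simplex (n i) (\<lambda>l. if l = j then 1 else 0)"
      using j by (simp add: strategy_simplex_def)
    have "(\<Sum>l<n i. (if l = j then 1 else 0) * payoff_vec m n A xs i l) = payoff_vec m n A xs i j"
    proof -
      have "(\<Sum>l<n i. (if l = j then 1 else 0) * payoff_vec m n A xs i l)
          = (\<Sum>l<n i. if l = j then payoff_vec m n A xs i l else 0)"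
        by (intro sum.cong refl) simp
      then show ?thesis using j by (simp add: sum.delta)
    qed
    then show ?thesis using nash_ineq[OF ne i ys] V_def by simp
  qed
  have sx: "strategy_simplex (n i) (xs i)" using ne i by (simp add: nash_equilibrium_def profile_def)
  have "(\<Sum>j<n i. xs i j * (V - payoff_vec m n A xs i j)) = V * (\<Sum>j<n i. xs i j) - V"
    by (simp add: right_diff_distrib sum_subtractf sum_distrib_right V_def mult_ac)
  also have "\<dots> = 0" using sx by (simp add: strategy_simplex_def)
  finally have z: "(\<Sum>j<n i. xs i j * (V - payoff_vec m n A xs i j)) = 0" .
  have nn: "\<forall>j\<in>{..<n i}. 0 \<le> xs i j * (V - payoff_vec m n A xs i j)"
    using le sx by (auto simp: strategy_simplex_def)
  have "xs i j0 * (V - payoff_vec m n A xs i j0) = 0"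
    using sum_nonneg_eq_0_iff[of "{..<n i}" "\<lambda>j. xs i j * (V - payoff_vec m n A xs i j)"] nn z j0 by auto
  moreover have "0 < xs i j0" using fm i j0 by (simp add: fully_mixed_def)
  ultimately show ?thesis unfolding V_def by simp
qed

lemma supply_eq:
  assumes gcs: "graphical_constant_sum m n A" and ne: "nash_equilibrium m n A xs"
    and px: "profile m n x"
  shows "supply_rate m n A xs x = (\<Sum>i<m. (\<Sum>j<n i. xs i j * payoff_vec m n A xs i j)
      - (\<Sum>j<n i. x i j * payoff_vec m n A xs i j))"
proof -
  have pxs: "profile m n xs" using ne by (simp add: nash_equilibrium_def)
  have s1: "supply_rate m n A xs x = Bf m n A xs x - Bf m n A x x"
    unfolding supply_rate_def Bf_def
    by (simp add: sum_subtractf[symmetric] algebra_simps)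
  have e1: "Bf m n A x x + Bf m n A x x = Bf m n A xs xs + Bf m n A xs xs"
    using Bf_sym[OF gcs px px] Bf_sym[OF gcs pxs pxs] by simp
  have e2: "Bf m n A xs x + Bf m n A x xs = Bf m n A xs xs + Bf m n A xs xs"
    using Bf_sym[OF gcs pxs px] Bf_sym[OF gcs pxs pxs] by simp
  have "supply_rate m n A xs x = Bf m n A xs xs - Bf m n A x xs"
    using s1 e1 e2 by linarith
  then show ?thesis unfolding Bf_def by (simp add: sum_subtractf)
qed

lemma supply_nonneg:
  assumes gcs: "graphical_constant_sum m n A" and ne: "nash_equilibrium m n A xs"
    and px: "profile m n x"
  shows "0 \<le> supply_rate m n A xs x"
  unfolding supply_eq[OF gcs ne px]
  using nash_ineq[OF ne] px by (intro sum_nonneg) (auto simp: profile_def)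

lemma supply_zero:
  assumes gcs: "graphical_constant_sum m n A" and ne: "nash_equilibrium m n A xs"
    and fm: "fully_mixed m n xs" and px: "profile m n x"
  shows "supply_rate m n A xs x = 0"
  unfolding supply_eq[OF gcs ne px]
proof (rule sum.neutral, rule ballI)
  fix i assume i: "i \<in> {..<m}"
  define V where "V = (\<Sum>j<n i. xs i j * payoff_vec m n A xs i j)"
  have sx: "strategy_simplex (n i) (x i)" using px i by (simp add: profile_def)
  have "(\<Sum>j<n i. x i j * payoff_vec m n A xs i j) = (\<Sum>j<n i. x i j * V)"
    using nash_const[OF ne fm] i V_def by (intro sum.cong refl) auto
  also have "\<dots> = V" using sx by (simp add: sum_distrib_right[symmetric] strategy_simplex_def)
  finally show "(\<Sum>j<n i. xs i j * payoff_vec m n A xs i j) - (\<Sum>j<n i. x i j * payoff_vec m n A xs i j) = 0"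
    using V_def by simp
qed

theorem proposition6p1:
  fixes m :: nat and n :: "nat \<Rightarrow> nat"
    and A :: "nat \<Rightarrow> nat \<Rightarrow> nat \<Rightarrow> nat \<Rightarrow> real"
    and xs :: "nat \<Rightarrow> nat \<Rightarrow> real"
  assumes "graphical_constant_sum m n A"
    and "nash_equilibrium m n A xs"
  shows "(\<forall>(X :: real \<Rightarrow> nat \<Rightarrow> nat \<Rightarrow> real) t. 0 \<le> t \<and> (\<forall>\<tau>\<ge>0. profile m n (X \<tau>)) \<longrightarrow>
            0 \<le> integral {0..t} (\<lambda>\<tau>. supply_rate m n A xs (X \<tau>)))
       \<and> (fully_mixed m n xs \<longrightarrow>
          (\<forall>(X :: real \<Rightarrow> nat \<Rightarrow> nat \<Rightarrow> real) t. 0 \<le> t \<and> (\<forall>\<tau>\<ge>0. profile m n (X \<tau>)) \<longrightarrow>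
            integral {0..t} (\<lambda>\<tau>. supply_rate m n A xs (X \<tau>)) = 0))"
proof (intro conjI allI impI)
  fix X :: "real \<Rightarrow> nat \<Rightarrow> nat \<Rightarrow> real" and t :: real
  assume h: "0 \<le> t \<and> (\<forall>\<tau>\<ge>0. profile m n (X \<tau>))"
  show "0 \<le> integral {0..t} (\<lambda>\<tau>. supply_rate m n A xs (X \<tau>))"
  proof (cases "(\<lambda>\<tau>. supply_rate m n A xs (X \<tau>)) integrable_on {0..t}")
    case True
    then show ?thesis
      by (rule integral_nonneg) (use h supply_nonneg[OF assms] in auto)
  next
    case False
    then show ?thesis by (simp add: not_integrable_integral)
  qed
next
  fix X :: "real \<Rightarrow> nat \<Rightarrow> nat \<Rightarrow> real" and t :: real
  assume fm: "fully_mixed m n xs"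
    and h: "0 \<le> t \<and> (\<forall>\<tau>\<ge>0. profile m n (X \<tau>))"
  have "integral {0..t} (\<lambda>\<tau>. supply_rate m n A xs (X \<tau>)) = integral {0..t} (\<lambda>\<tau>. 0::real)"
    by (rule integral_cong) (use h supply_zero[OF assms fm] in auto)
  then show "integral {0..t} (\<lambda>\<tau>. supply_rate m n A xs (X \<tau>)) = 0" by simp
qed

end
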